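(* Let $A$ be a cyclic Leibniz algebra generated by $a$, with notation as in the context. For $1\le j\le s$ and $1\le i\le n_j$ put $U_{j,i}=\{b\in A: p_j(L_a)^i(b)=0\}$. Then $A^2$ is abelian, $A^2=U_{1,n_1-1}\oplus U_{2,n_2}\oplus\cdots\oplus U_{s,n_s}$, and every $U_{j,i}$ with $(j,i)\neq(1,n_1)$ is a (two-sided) ideal of $A$.
   Context: A (left) Leibniz algebra is an algebra satisfying $x(yz)=(xy)z+y(xz)$ for all $x,y,z$; all algebras are finite-dimensional over a field $F$. $A$ is a cyclic Leibniz algebra generated by $a$: $A$ is generated as an algebra by the single element $a$, and with $a^1=a$, $a^{k+1}=aa^k$, the elements $a,a^2,\dots,a^n$ form a basis of $A$. Write $aa^n=\alpha_2a^2+\cdots+\alpha_na^n$. $L_a:A\to A$ is $b\mapsto ab$, with characteristic (and minimal) polynomial $p(x)=x^n-\alpha_nx^{n-1}-\cdots-\alpha_2x=p_1(x)^{n_1}\cdots p_s(x)^{n_s}$, the $p_j$ distinct monic irreducibles over $F$, $p_1(x)=x$. $A^2=AA$. *)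

theory Defs
  imports Main "HOL-Computational_Algebra.Computational_Algebra"
begin

text \<open>Left-normed powers: apow m a 1 = a, apow m a (k+1) = m a (apow m a k).
  (apow m a 0 = 0 is a dummy value and never used.)\<close>
fun apow :: "('v::zero \<Rightarrow> 'v \<Rightarrow> 'v) \<Rightarrow> 'v \<Rightarrow> nat \<Rightarrow> 'v" where
  "apow m a 0 = 0"
| "apow m a (Suc 0) = a"
| "apow m a (Suc (Suc k)) = m a (apow m a (Suc k))"

definition poly_op :: "('f::field \<Rightarrow> 'v::ab_group_add \<Rightarrow> 'v) \<Rightarrow> 'f poly \<Rightarrow> ('v \<Rightarrow> 'v) \<Rightarrow> 'v \<Rightarrow> 'v" where
  "poly_op scale p f b = (\<Sum>i\<le>degree p. scale (coeff p i) ((f ^^ i) b))"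

definition is_ideal :: "('f::field \<Rightarrow> 'v::ab_group_add \<Rightarrow> 'v) \<Rightarrow> ('v \<Rightarrow> 'v \<Rightarrow> 'v) \<Rightarrow> 'v set \<Rightarrow> bool" where
  "is_ideal scale m I \<longleftrightarrow> module.subspace scale I \<and> (\<forall>x u. u \<in> I \<longrightarrow> m x u \<in> I \<and> m u x \<in> I)"

definition alg_square :: "('f::field \<Rightarrow> 'v::ab_group_add \<Rightarrow> 'v) \<Rightarrow> ('v \<Rightarrow> 'v \<Rightarrow> 'v) \<Rightarrow> 'v set" where
  "alg_square scale m = module.span scale {m x y | x y. True}"

end

theory Submission
  imports Defs
begin

definition bz :: "'a::comm_ring_1 \<Rightarrow> 'a \<Rightarrow> bool" where
  "bz f g \<longleftrightarrow> (\<exists>r t. r * f + t * g = 1)"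

lemma bz_sym: "bz f g \<Longrightarrow> bz g f"
  unfolding bz_def by (metis add.commute)

lemma bz_one: "bz f 1"
  unfolding bz_def by (rule exI[of _ 0], rule exI[of _ 1]) simp

lemma bz_mult: "bz f g \<Longrightarrow> bz f h \<Longrightarrow> bz f (g * h)"
proof -
  assume "bz f g" "bz f h"
  then obtain r t r' t' where a: "r * f + t * g = 1" and b: "r' * f + t' * h = 1"
    unfolding bz_def by blast
  have "(r * f + t * g) * (r' * f + t' * h) = 1" using a b by simp
  then have "(r * r' * f + r * t' * h + t * g * r') * f + (t * t') * (g * h) = 1"
    by (simp add: algebra_simps)
  then show "bz f (g * h)" unfolding bz_def by blast
qed

lemma bz_power: "bz f g \<Longrightarrow> bz f (g ^ k)"
  by (induct k) (simp_all add: bz_one bz_mult)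

lemma bz_power2: "bz f g \<Longrightarrow> bz (f ^ j) (g ^ k)"
  by (rule bz_power, rule bz_sym, rule bz_power, rule bz_sym)

lemma bz_prod: "(\<And>i. i \<in> A \<Longrightarrow> bz f (g i)) \<Longrightarrow> bz f (\<Prod>i\<in>A. g i)"
  by (induct A rule: infinite_finite_induct) (simp_all add: bz_one bz_mult)

lemma bz_poly:
  fixes f g :: "'a::field poly"
  assumes "\<And>d. d dvd f \<Longrightarrow> d dvd g \<Longrightarrow> is_unit d"
  shows "bz f g"
proof -
  let ?M = "\<lambda>d. d \<noteq> 0 \<and> (\<exists>r t. d = r * f + t * g)"
  have "f \<noteq> 0 \<or> g \<noteq> 0"
  proof (rule ccontr)
    assume "\<not> (f \<noteq> 0 \<or> g \<noteq> 0)"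
    then have f0: "f = 0" and g0: "g = 0" by auto
    have "(0::'a poly) dvd f" "(0::'a poly) dvd g" using f0 g0 by auto
    then have "is_unit (0::'a poly)" by (rule assms)
    then show False by simp
  qed
  then have "\<exists>d. ?M d"
  proof
    assume "f \<noteq> 0" moreover have "f = 1 * f + 0 * g" by simp
    ultimately show ?thesis by blast
  next
    assume "g \<noteq> 0" moreover have "g = 0 * f + 1 * g" by simp
    ultimately show ?thesis by blast
  qed
  then obtain d0 where "?M d0" by blast
  from ex_has_least_nat[of ?M d0 degree, OF this] obtain d where
    d: "?M d" and dmin: "\<And>y. ?M y \<Longrightarrow> degree d \<le> degree y" by blast
  from d obtain r t where drt: "d = r * f + t * g" by blast
  have dv: "d dvd x" if "x = r' * f + t' * g" for x r' t'
  proof (rule ccontr)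
    assume nd: "\<not> d dvd x"
    then have nz: "x mod d \<noteq> 0" by (simp add: dvd_eq_mod_eq_0)
    have "x mod d = x - (x div d) * d" by (simp add: minus_div_mult_eq_mod)
    also have "\<dots> = (r' - x div d * r) * f + (t' - x div d * t) * g"
      by (simp add: that drt algebra_simps)
    finally have "?M (x mod d)" using nz by blast
    then have "degree d \<le> degree (x mod d)" by (rule dmin)
    moreover have "degree (x mod d) < degree d" using degree_mod_less' d nz by blast
    ultimately show False by simp
  qed
  have "d dvd f" by (rule dv[of f 1 0]) simp
  moreover have "d dvd g" by (rule dv[of g 0 1]) simp
  ultimately have "is_unit d" by (rule assms)
  then obtain k where k: "1 = d * k" by (auto elim: dvdE)
  have "(k * r) * f + (k * t) * g = 1" using k drt by (simp add: algebra_simps)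
  then show ?thesis unfolding bz_def by blast
qed

lemma monic_irr_eq:
  fixes p q :: "'a::field poly"
  assumes "irreducible p" "irreducible q" "lead_coeff p = 1" "lead_coeff q = 1"
    "d dvd p" "d dvd q" "\<not> is_unit d"
  shows "p = q"
proof -
  obtain c where c: "p = d * c" using assms(5) by (auto elim: dvdE)
  obtain e where e: "q = d * e" using assms(6) by (auto elim: dvdE)
  have "is_unit c" using irreducibleD[OF assms(1) c] assms(7) by blast
  then obtain c0 where c0: "c = [:c0:]" by (auto simp: is_unit_poly_iff)
  have "is_unit e" using irreducibleD[OF assms(2) e] assms(7) by blast
  then obtain e0 where e0: "e = [:e0:]" by (auto simp: is_unit_poly_iff)
  have "c0 \<noteq> 0" using assms(3) c c0 by auto
  then have "lead_coeff d * c0 = 1" using assms(3) c c0 by (simp add: mult.commute)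
  have "e0 \<noteq> 0" using assms(4) e e0 by auto
  then have "lead_coeff d * e0 = 1" using assms(4) e e0 by (simp add: mult.commute)
  have "c0 = e0" by (metis \<open>lead_coeff d * c0 = 1\<close> \<open>lead_coeff d * e0 = 1\<close> mult_cancel_left mult_zero_left zero_neq_one)
  then show ?thesis using c e c0 e0 by simp
qed

lemma bz_irr:
  fixes p q :: "'a::field poly"
  assumes "irreducible p" "irreducible q" "lead_coeff p = 1" "lead_coeff q = 1" "p \<noteq> q"
  shows "bz p q"
  by (rule bz_poly) (use monic_irr_eq[OF assms(1-4)] assms(5) in blast)



locale opE = vector_space scale for scale :: "'f::field \<Rightarrow> 'v::ab_group_add \<Rightarrow> 'v" +
  fixes L :: "'v \<Rightarrow> 'v"
  assumes L_add: "L (x + y) = L x + L y"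
    and L_scale: "L (scale c x) = scale c (L x)"
begin

abbreviation E where "E p \<equiv> poly_op scale p L"

lemma L_0[simp]: "L 0 = 0"
  using L_scale[of 0 0] by simp

lemma L_sum: "L (sum g A) = (\<Sum>i\<in>A. L (g i))"
  by (induct A rule: infinite_finite_induct) (auto simp: L_add)

lemma poly_op_ext:
  assumes "degree p \<le> K"
  shows "E p b = (\<Sum>i\<le>K. scale (coeff p i) ((L ^^ i) b))"
  unfolding poly_op_def
  by (rule sum.mono_neutral_left) (use assms in \<open>auto simp: coeff_eq_0\<close>)

lemma E_pCons: "E (pCons c p) b = scale c b + L (E p b)"
proof -
  have "E (pCons c p) b = (\<Sum>i\<le>Suc (degree p). scale (coeff (pCons c p) i) ((L ^^ i) b))"
    by (rule poly_op_ext) (rule degree_pCons_le)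
  also have "\<dots> = scale c b + (\<Sum>i\<le>degree p. scale (coeff p i) ((L ^^ Suc i) b))"
    by (subst sum.atMost_Suc_shift) simp
  also have "(\<Sum>i\<le>degree p. scale (coeff p i) ((L ^^ Suc i) b)) = L (E p b)"
    unfolding poly_op_def L_sum by (simp add: L_scale)
  finally show ?thesis .
qed

lemma E_zero[simp]: "E 0 b = 0"
  unfolding poly_op_def by simp

lemma E_lin_add: "E p (x + y) = E p x + E p y"
  by (induct p) (simp_all add: E_pCons L_add scale_right_distrib algebra_simps)

lemma E_lin_scale: "E p (scale c x) = scale c (E p x)"
  by (induct p) (simp_all add: E_pCons L_scale scale_right_distrib algebra_simps scale_left_commute)

lemma E_lin_0[simp]: "E p 0 = 0"
  using E_lin_scale[of p 0 0] by simp

lemma E_lin_diff: "E p (x - y) = E p x - E p y"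
  using E_lin_add[of p "x - y" y] by (simp add: algebra_simps)

lemma E_lin_sum: "E p (sum g A) = (\<Sum>i\<in>A. E p (g i))"
  by (induct A rule: infinite_finite_induct) (auto simp: E_lin_add)

lemma E_smult: "E (smult c p) b = scale c (E p b)"
  by (induct p) (simp_all add: E_pCons L_scale scale_right_distrib)

lemma E_add: "E (p + q) b = E p b + E q b"
proof -
  let ?K = "max (degree p) (degree q)"
  have "E (p + q) b = (\<Sum>i\<le>?K. scale (coeff (p+q) i) ((L ^^ i) b))"
    by (rule poly_op_ext) (rule degree_add_le_max)
  also have "\<dots> = (\<Sum>i\<le>?K. scale (coeff p i) ((L ^^ i) b)) + (\<Sum>i\<le>?K. scale (coeff q i) ((L ^^ i) b))"
    by (simp add: scale_left_distrib sum.distrib)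
  also have "\<dots> = E p b + E q b"
    by (simp add: poly_op_ext[of p ?K] poly_op_ext[of q ?K])
  finally show ?thesis .
qed

lemma E_diff: "E (p - q) b = E p b - E q b"
proof -
  let ?K = "max (degree p) (degree q)"
  have "E (p - q) b = (\<Sum>i\<le>?K. scale (coeff (p-q) i) ((L ^^ i) b))"
    by (rule poly_op_ext) (rule degree_diff_le_max)
  also have "\<dots> = (\<Sum>i\<le>?K. scale (coeff p i) ((L ^^ i) b)) - (\<Sum>i\<le>?K. scale (coeff q i) ((L ^^ i) b))"
    by (simp add: scale_left_diff_distrib sum_subtractf)
  also have "\<dots> = E p b - E q b"
    by (simp add: poly_op_ext[of p ?K] poly_op_ext[of q ?K])
  finally show ?thesis .
qed

lemma E_sum: "E (sum f A) b = (\<Sum>i\<in>A. E (f i) b)"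
  by (induct A rule: infinite_finite_induct) (auto simp: E_add)

lemma E_mult: "E (p * q) b = E p (E q b)"
proof (induct p arbitrary: b)
  case 0 then show ?case by simp
next
  case (pCons c p)
  have "E (pCons c p * q) b = scale c (E q b) + E (pCons 0 (p * q)) b"
    by (simp add: E_add E_smult)
  also have "\<dots> = scale c (E q b) + L (E p (E q b))"
    by (simp add: E_pCons pCons(2))
  also have "\<dots> = E (pCons c p) (E q b)" by (simp add: E_pCons)
  finally show ?case .
qed

lemma E_one[simp]: "E 1 b = b"
  using E_pCons[of 1 0 b] by (simp add: one_pCons)

lemma E_X: "E [:0, 1:] b = L b"
  using E_pCons[of 0 1 b] E_one by (simp only: one_pCons scale_zero_left add_0_left)

lemma E_monom: "E (monom c k) b = scale c ((L ^^ k) b)"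
proof (induct k)
  case 0 then show ?case using E_pCons[of c 0 b] by (simp add: monom_0)
next
  case (Suc k) then show ?case by (simp add: monom_Suc E_pCons L_scale)
qed

lemma E_power: "(E p ^^ k) b = E (p ^ k) b"
  by (induct k arbitrary: b) (simp_all add: E_mult)

lemma E_comm: "E p (L b) = L (E p b)"
  using E_mult[of p "[:0,1:]" b] E_mult[of "[:0,1:]" p b] by (simp add: E_X mult.commute)

lemma E_comm_pow: "E p ((L ^^ k) b) = (L ^^ k) (E p b)"
  by (induct k) (simp_all add: E_comm)

lemma E_dvd: "q dvd r \<Longrightarrow> E q b = 0 \<Longrightarrow> E r b = 0"
  by (auto elim!: dvdE simp: mult.commute[of q] E_mult)

lemma ker_subspace: "subspace {b. E p b = 0}"
  unfolding subspace_def by (simp add: E_lin_add E_lin_scale)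

lemma bez:
  fixes f g :: "'f poly"
  assumes "bz f g"
  obtains r t where "r * f + t * g = 1"
  using assms unfolding bz_def by blast

lemma two_unique:
  assumes "bz f g" "E f u = 0" "E g u = 0"
  shows "u = 0"
proof -
  obtain r t where rt: "r * f + t * g = 1" using bez assms(1) by blast
  have "u = E (r * f + t * g) u" by (simp add: rt)
  also have "\<dots> = 0" using assms by (simp add: E_add E_mult)
  finally show ?thesis .
qed

lemma two_exist:
  assumes "bz f g" "E (f * g) v = 0"
  shows "\<exists>x y. v = x + y \<and> E f x = 0 \<and> E g y = 0"
proof -
  obtain r t where rt: "r * f + t * g = 1" using bez assms(1) by blast
  have v: "v = E (t * g) v + E (r * f) v"
    using E_add[of "r*f" "t*g" v] rt by (simp add: add.commute)
  have "E f (E (t * g) v) = E t (E (f * g) v)"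
    by (simp add: E_mult[symmetric] ac_simps)
  moreover have "E g (E (r * f) v) = E r (E (f * g) v)"
    by (simp add: E_mult[symmetric] ac_simps)
  ultimately show ?thesis using v assms(2) by auto
qed

lemma decomp_exist:
  assumes "finite J" "\<And>j k. j \<in> J \<Longrightarrow> k \<in> J \<Longrightarrow> j \<noteq> k \<Longrightarrow> bz (Q j) (Q k)"
    "E (\<Prod>j\<in>J. Q j) v = 0"
  shows "\<exists>u. (\<forall>j\<in>J. E (Q j) (u j) = 0) \<and> v = (\<Sum>j\<in>J. u j)"
  using assms
proof (induct J arbitrary: v rule: finite_induct)
  case empty then show ?case by simp
next
  case (insert j J)
  have cop: "bz (Q j) (\<Prod>k\<in>J. Q k)"
    by (rule bz_prod) (use insert in auto)
  from insert(5) insert(1,2) have "E (Q j * (\<Prod>k\<in>J. Q k)) v = 0" by simp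
  from two_exist[OF cop this] obtain x y where xy: "v = x + y" "E (Q j) x = 0"
    "E (\<Prod>k\<in>J. Q k) y = 0" by blast
  from insert(3)[OF _ xy(3)] insert(4) obtain u where u: "\<forall>k\<in>J. E (Q k) (u k) = 0" "y = (\<Sum>k\<in>J. u k)"
    by blast
  have "(\<Sum>k\<in>insert j J. (u(j := x)) k) = x + (\<Sum>k\<in>J. u k)"
    using insert(1,2) by (auto intro!: sum.cong)
  then show ?case using xy u insert(2)
    by (intro exI[of _ "u(j := x)"]) auto
qed

lemma decomp_in:
  assumes "finite J" "\<forall>j\<in>J. E (Q j) (u j) = 0"
  shows "E (\<Prod>j\<in>J. Q j) (\<Sum>j\<in>J. u j) = 0"
  unfolding E_lin_sum
  by (rule sum.neutral) (use assms in \<open>blast intro: E_dvd dvd_prodI\<close>)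

lemma decomp_unique:
  assumes "finite J" "\<And>j k. j \<in> J \<Longrightarrow> k \<in> J \<Longrightarrow> j \<noteq> k \<Longrightarrow> bz (Q j) (Q k)"
    "\<forall>j\<in>J. E (Q j) (u j) = 0" "(\<Sum>j\<in>J. u j) = 0" "j \<in> J"
  shows "u j = 0"
proof -
  let ?R = "\<Prod>k\<in>J-{j}. Q k"
  have cop: "bz (Q j) ?R"
    by (rule bz_prod) (use assms in auto)
  have "0 = E ?R (\<Sum>k\<in>J. u k)" using assms(4) by simp
  also have "\<dots> = E ?R (u j) + (\<Sum>k\<in>J-{j}. E ?R (u k))"
    unfolding E_lin_sum using assms(1,5) by (simp add: sum.remove)
  also have "(\<Sum>k\<in>J-{j}. E ?R (u k)) = 0"
    by (rule sum.neutral) (use assms in \<open>blast intro: E_dvd dvd_prodI\<close>)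
  finally have "E ?R (u j) = 0" by simp
  then show ?thesis using two_unique[OF cop] assms(3,5) by blast
qed

lemma pre_subspace:
  assumes "\<And>x y. g (x + y) = g x + g y" "\<And>c x. g (scale c x) = scale c (g x)" "subspace T"
  shows "subspace {x. g x \<in> T}"
proof -
  have g0: "g 0 = 0" using assms(2)[of 0 0] by simp
  show ?thesis
    by (rule subspaceI) (auto simp: g0 assms subspace_0 subspace_add subspace_scale)
qed

lemma funpow_L0: "(L ^^ k) 0 = 0"
  by (induct k) simp_all

end



theorem mainTheorem10:
  fixes scale :: "'f::field \<Rightarrow> 'v::ab_group_add \<Rightarrow> 'v"
    and m :: "'v \<Rightarrow> 'v \<Rightarrow> 'v"
    and a :: 'v and n :: nat and \<alpha> :: "nat \<Rightarrow> 'f"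
    and s :: nat and P :: "nat \<Rightarrow> 'f poly" and N :: "nat \<Rightarrow> nat"
  assumes vs: "vector_space scale"
    and lin_r: "\<And>x. Vector_Spaces.linear scale scale (m x)"
    and lin_l: "\<And>y. Vector_Spaces.linear scale scale (\<lambda>x. m x y)"
    and leibniz: "\<And>x y z. m x (m y z) = m (m x y) z + m y (m x z)"
    and n_pos: "n \<ge> 1"
    and inj: "inj_on (apow m a) {1..n}"
    and indep: "\<not> module.dependent scale (apow m a ` {1..n})"
    and spans: "module.span scale (apow m a ` {1..n}) = UNIV"
    and alpha: "m a (apow m a n) = (\<Sum>i=2..n. scale (\<alpha> i) (apow m a i))"
    and factor: "monom 1 n - (\<Sum>i=2..n. monom (\<alpha> i) (i - 1)) = (\<Prod>j=1..s. P j ^ N j)"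
    and s_pos: "s \<ge> 1"
    and P1: "P 1 = [:0, 1:]"
    and P_irr: "\<And>j. j \<in> {1..s} \<Longrightarrow> irreducible (P j) \<and> lead_coeff (P j) = 1"
    and P_inj: "inj_on P {1..s}"
    and N_pos: "\<And>j. j \<in> {1..s} \<Longrightarrow> N j \<ge> 1"
  defines "U \<equiv> (\<lambda>j i. {b. ((poly_op scale (P j) (m a)) ^^ i) b = 0})"
    and "W \<equiv> (\<lambda>j. {b. ((poly_op scale (P j) (m a)) ^^ (if j = 1 then N 1 - 1 else N j)) b = 0})"
  shows "(\<forall>x\<in>alg_square scale m. \<forall>y\<in>alg_square scale m. m x y = 0)
    \<and> alg_square scale m = {(\<Sum>j=1..s. u j) | u. \<forall>j\<in>{1..s}. u j \<in> W j}
    \<and> (\<forall>u. (\<forall>j\<in>{1..s}. u j \<in> W j) \<and> (\<Sum>j=1..s. u j) = 0 \<longrightarrow> (\<forall>j\<in>{1..s}. u j = 0))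
    \<and> (\<forall>j\<in>{1..s}. \<forall>i\<in>{1..N j}. (j, i) \<noteq> (1, N 1) \<longrightarrow> is_ideal scale m (U j i))"


proof -
  interpret vector_space scale by (rule vs)
  have ml_add: "m (x + y) z = m x z + m y z" for x y z
    using lin_l[of z] unfolding Vector_Spaces.linear_iff by blast
  have ml_scale: "m (scale c x) z = scale c (m x z)" for c x z
    using lin_l[of z] unfolding Vector_Spaces.linear_iff by blast
  have ml0: "m 0 z = 0" for z using ml_scale[of 0 0 z] by simp
  have mr_add: "m z (x + y) = m z x + m z y" for x y z
    using lin_r[of z] unfolding Vector_Spaces.linear_iff by blast
  have mr_scale: "m z (scale c x) = scale c (m z x)" for c x z
    using lin_r[of z] unfolding Vector_Spaces.linear_iff by blast
  interpret opE scale "m a"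
    by (intro opE.intro vs opE_axioms.intro mr_add mr_scale)
  define A where "A = apow m a"
  have A1: "A 1 = a" by (simp add: A_def)
  have A_suc: "A (Suc k) = m a (A k)" if "k \<ge> 1" for k
    using that by (cases k) (simp_all add: A_def)
  have A_pow: "A k = (m a ^^ (k - 1)) a" if "k \<ge> 1" for k
    using that
  proof (induct k)
    case 0 then show ?case by simp
  next
    case (Suc k)
    show ?case
    proof (cases "k = 0")
      case True then show ?thesis by (simp add: A_def)
    next
      case False
      then have "A (Suc k) = m a ((m a ^^ (k - 1)) a)" using A_suc Suc by simp
      also have "\<dots> = (m a ^^ k) a" using False by (cases k) simp_all
      finally show ?thesis by simp
    qed
  qed
  have LA: "m (A k) z = 0" if "k \<ge> 2" for k z
    using that
  proof (induct k arbitrary: z rule: nat_induct_at_least)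
    case base
    have "A 2 = m a a" by (simp add: A_def numeral_2_eq_2)
    then show ?case using leibniz[of a a z] by simp
  next
    case (Suc k)
    have "A (Suc k) = m a (A k)" using A_suc Suc by simp
    then show ?case using leibniz[of a "A k" z] Suc(2)[of z] Suc(2)[of "m a z"] by simp
  qed
  have B: "span (A ` {1..n}) = UNIV" using spans by (simp add: A_def)
  have span_all: "x \<in> T" if "subspace T" "\<And>k. k \<in> {1..n} \<Longrightarrow> A k \<in> T" for T x
  proof -
    have "span (A ` {1..n}) \<subseteq> T" by (rule span_minimal) (use that in auto)
    then show ?thesis using B by auto
  qed
  define S where "S = span (A ` {2..n})"
  have subS: "subspace S" by (simp add: S_def)
  have AS: "A k \<in> S" if "k \<in> {2..n}" for k
    using that unfolding S_def by (intro span_base) auto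
  have S_LA: "m u z = 0" if "u \<in> S" for u z
  proof -
    have "subspace {u. m u z = 0}"
      by (rule subspaceI) (simp_all add: ml_add ml_scale ml0)
    then have "S \<subseteq> {u. m u z = 0}" unfolding S_def
      by (intro span_minimal) (auto intro: LA)
    then show ?thesis using that by auto
  qed
  have LS: "m a y \<in> S" for y
  proof -
    have "y \<in> {y. m a y \<in> S}"
    proof (rule span_all)
      show "subspace {y. m a y \<in> S}" by (rule pre_subspace) (simp_all add: mr_add mr_scale subS)
    next
      fix k assume k: "k \<in> {1..n}"
      have "m a (A k) \<in> S"
      proof (cases "k = n")
        case True
        have "m a (A n) = (\<Sum>i=2..n. scale (\<alpha> i) (A i))" using alpha by (simp add: A_def)
        also have "\<dots> \<in> S" unfolding S_def
          by (intro span_sum span_scale span_base) auto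
        finally show ?thesis using True by simp
      next
        case False
        then have "m a (A k) = A (Suc k)" using A_suc k by simp
        then show ?thesis using AS k False by simp
      qed
      then show "A k \<in> {y. m a y \<in> S}" by simp
    qed
    then show ?thesis by simp
  qed
  have mS: "m x y \<in> S" for x y
  proof -
    have "x \<in> {x. m x y \<in> S}"
    proof (rule span_all)
      show "subspace {x. m x y \<in> S}" by (rule pre_subspace) (simp_all add: ml_add ml_scale subS)
    next
      fix k assume k: "k \<in> {1..n}"
      have "m (A k) y \<in> S"
      proof (cases "k = 1")
        case True then show ?thesis using LS A1 by simp
      next
        case False then show ?thesis using LA[of k y] k subspace_0[OF subS] by simp
      qed
      then show "A k \<in> {x. m x y \<in> S}" by simp
    qed
    then show ?thesis by simp
  qed
  have sq: "alg_square scale m = S"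
  proof
    show "alg_square scale m \<subseteq> S" unfolding alg_square_def
      by (rule span_minimal) (use mS subS in auto)
    show "S \<subseteq> alg_square scale m" unfolding S_def alg_square_def
    proof (rule span_mono, rule subsetI)
      fix v assume "v \<in> A ` {2..n}"
      then obtain k where k: "k \<in> {2..n}" "v = A k" by blast
      then have "A k = m a (A (k - 1))" using A_suc[of "k - 1"] by auto
      then show "v \<in> {m x y | x y. True}" using k by blast
    qed
  qed
  define pp where "pp = monom 1 n - (\<Sum>i=2..n. monom (\<alpha> i) (i - 1))"
  define e where "e = (\<lambda>j. if j = 1 then N 1 - 1 else N j)"
  define Q where "Q = (\<lambda>j. P j ^ e j)"
  define qq where "qq = (\<Prod>j=1..s. Q j)"
  have pp_prod: "pp = (\<Prod>j=1..s. P j ^ N j)" using factor by (simp add: pp_def)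
  have N1: "N 1 \<ge> 1" using N_pos s_pos by simp
  have pp_eq: "pp = [:0, 1:] * qq"
  proof -
    have "pp = P 1 ^ N 1 * (\<Prod>j=2..s. P j ^ N j)"
      unfolding pp_prod using prod.atLeast_Suc_atMost[OF s_pos, of "\<lambda>j. P j ^ N j"] by (simp add: numeral_2_eq_2)
    also have "(\<Prod>j=2..s. P j ^ N j) = (\<Prod>j=2..s. Q j)"
      by (rule prod.cong) (auto simp: Q_def e_def)
    also have "P 1 ^ N 1 = [:0, 1:] * Q 1"
      using N1 P1 by (cases "N 1") (simp_all add: Q_def e_def)
    also have "qq = Q 1 * (\<Prod>j=2..s. Q j)"
      unfolding qq_def using prod.atLeast_Suc_atMost[OF s_pos, of Q] by (simp add: numeral_2_eq_2)
    ultimately show ?thesis by (simp add: mult.assoc)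
  qed
  have cpp: "coeff pp k = (if n = k then 1 else 0) - (\<Sum>i=2..n. if i - 1 = k then \<alpha> i else 0)" for k
    by (simp add: pp_def coeff_diff coeff_sum)
  have cqq: "coeff qq k = coeff pp (Suc k)" for k
    by (simp add: pp_eq)
  have cqq_big: "coeff qq k = 0" if "k \<ge> n" for k
    unfolding cqq cpp using that by (auto intro!: sum.neutral)
  have cqq_top: "coeff qq (n - 1) = 1"
    unfolding cqq cpp using n_pos by (auto intro!: sum.neutral)
  have deg_qq: "degree qq \<le> n - 1"
    by (rule degree_le) (use cqq_big in auto)
  have Epp_a: "E pp a = 0"
  proof -
    have "E pp a = (m a ^^ n) a - (\<Sum>i=2..n. scale (\<alpha> i) ((m a ^^ (i - 1)) a))"
      by (simp add: pp_def E_diff E_sum E_monom)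
    also have "(m a ^^ n) a = m a (A n)"
      using A_pow[of n] n_pos by (cases n) simp_all
    also have "\<dots> = (\<Sum>i=2..n. scale (\<alpha> i) (A i))" using alpha by (simp add: A_def)
    also have "\<dots> = (\<Sum>i=2..n. scale (\<alpha> i) ((m a ^^ (i - 1)) a))"
      by (rule sum.cong) (auto simp: A_pow)
    finally show ?thesis by simp
  qed
  have Epp: "E pp v = 0" for v
  proof -
    have "v \<in> {v. E pp v = 0}"
    proof (rule span_all)
      show "subspace {v. E pp v = 0}" by (rule ker_subspace)
    next
      fix k assume "k \<in> {1..n}"
      then show "A k \<in> {v. E pp v = 0}"
        by (simp add: A_pow E_comm_pow Epp_a funpow_L0)
    qed
    then show ?thesis by simp
  qed
  have S_sub: "S \<subseteq> {v. E qq v = 0}"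
    unfolding S_def
  proof (rule span_minimal)
    show "subspace {v. E qq v = 0}" by (rule ker_subspace)
    show "A ` {2..n} \<subseteq> {v. E qq v = 0}"
    proof
      fix v assume "v \<in> A ` {2..n}"
      then obtain k where k: "k \<in> {2..n}" "v = A k" by blast
      then have "A k = m a (A (k - 1))" using A_suc[of "k - 1"] by auto
      moreover have "E qq (m a w) = E pp w" for w
        using E_mult[of qq "[:0,1:]" w] by (simp add: E_X pp_eq mult.commute)
      ultimately show "v \<in> {v. E qq v = 0}" using k Epp by simp
    qed
  qed
  have Eqq_a: "E qq a \<noteq> 0"
  proof
    assume z: "E qq a = 0"
    have "E qq a = (\<Sum>i\<le>n - 1. scale (coeff qq i) ((m a ^^ i) a))"
      by (rule poly_op_ext[OF deg_qq])
    also have "\<dots> = (\<Sum>i=0..n - 1. scale (coeff qq (Suc i - 1)) (A (Suc i)))"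
      by (simp add: A_pow atMost_atLeast0)
    also have "\<dots> = (\<Sum>k=1..n. scale (coeff qq (k - 1)) (A k))"
      using n_pos by (subst sum.shift_bounds_cl_Suc_ivl[symmetric]) simp
    finally have z2: "(\<Sum>k=1..n. scale (coeff qq (k - 1)) (A k)) = 0" using z by simp
    define u where "u = (\<lambda>t. coeff qq (the_inv_into {1..n} A t - 1))"
    have injA: "inj_on A {1..n}" using inj by (simp add: A_def)
    have "(\<Sum>t\<in>A ` {1..n}. scale (u t) t) = (\<Sum>k=1..n. scale (u (A k)) (A k))"
      by (rule sum.reindex[OF injA, unfolded comp_def])
    also have "\<dots> = (\<Sum>k=1..n. scale (coeff qq (k - 1)) (A k))"
    proof (rule sum.cong[OF refl])
      fix k assume "k \<in> {1..n}"
      then show "scale (u (A k)) (A k) = scale (coeff qq (k - 1)) (A k)"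
        by (simp only: u_def the_inv_into_f_f[OF injA])
    qed
    finally have "(\<Sum>t\<in>A ` {1..n}. scale (u t) t) = 0" using z2 by simp
    moreover have "\<not> dependent (A ` {1..n})" using indep by (simp add: A_def)
    ultimately have "\<forall>t\<in>A ` {1..n}. u t = 0"
      using dependent_finite[of "A ` {1..n}"] by auto
    then have "u (A n) = 0" using n_pos by auto
    moreover have "u (A n) = 1"
    proof -
      have "n \<in> {1..n}" using n_pos by simp
      then have "u (A n) = coeff qq (n - 1)" by (simp only: u_def the_inv_into_f_f[OF injA])
      then show ?thesis using cqq_top by simp
    qed
    ultimately show False by simp
  qed
  have S_ker: "S = {v. E qq v = 0}"
  proof
    show "S \<subseteq> {v. E qq v = 0}" by (rule S_sub)
    show "{v. E qq v = 0} \<subseteq> S"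
    proof
      fix v assume v: "v \<in> {v. E qq v = 0}"
      have "A ` {1..n} = insert a (A ` {2..n})"
        using n_pos A1 by (auto simp: image_iff) (metis atLeastAtMost_iff le_antisym not_less_eq_eq numeral_2_eq_2)
      then have "v \<in> span (insert a (A ` {2..n}))" using B by simp
      then obtain c where c: "v - scale c a \<in> S" unfolding span_insert S_def by blast
      then have "E qq (v - scale c a) = 0" using S_sub by auto
      then have "scale c (E qq a) = 0" using v by (simp add: E_lin_diff E_lin_scale)
      then have "c = 0" using Eqq_a by simp
      then show "v \<in> S" using c by simp
    qed
  qed
  have sqk: "alg_square scale m = {v. E qq v = 0}" using sq S_ker by simp
  have W_eq: "W j = {b. E (Q j) b = 0}" for j
    by (simp add: W_def Q_def e_def E_power)
  have cop: "bz (Q j) (Q k)" if "j \<in> {1..s}" "k \<in> {1..s}" "j \<noteq> k" for j k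
  proof -
    have "P j \<noteq> P k" using P_inj that unfolding inj_on_def by blast
    then have "bz (P j) (P k)" using P_irr[OF that(1)] P_irr[OF that(2)] by (intro bz_irr) auto
    then show ?thesis unfolding Q_def by (rule bz_power2)
  qed
  have part1: "\<forall>x\<in>alg_square scale m. \<forall>y\<in>alg_square scale m. m x y = 0"
    using sq S_LA by auto
  have part2: "alg_square scale m = {(\<Sum>j=1..s. u j) | u. \<forall>j\<in>{1..s}. u j \<in> W j}"
  proof
    show "alg_square scale m \<subseteq> {(\<Sum>j=1..s. u j) | u. \<forall>j\<in>{1..s}. u j \<in> W j}"
    proof
      fix v assume "v \<in> alg_square scale m"
      then have "E (\<Prod>j\<in>{1..s}. Q j) v = 0" using sqk qq_def by simp
      from decomp_exist[OF _ cop this] obtain u where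
        "\<forall>j\<in>{1..s}. E (Q j) (u j) = 0" "v = (\<Sum>j\<in>{1..s}. u j)" by auto
      then show "v \<in> {(\<Sum>j=1..s. u j) | u. \<forall>j\<in>{1..s}. u j \<in> W j}"
        by (auto simp: W_eq)
    qed
    show "{(\<Sum>j=1..s. u j) | u. \<forall>j\<in>{1..s}. u j \<in> W j} \<subseteq> alg_square scale m"
    proof
      fix v assume "v \<in> {(\<Sum>j=1..s. u j) | u. \<forall>j\<in>{1..s}. u j \<in> W j}"
      then obtain u where u: "\<forall>j\<in>{1..s}. u j \<in> W j" "v = (\<Sum>j=1..s. u j)" by blast
      have "E (\<Prod>j\<in>{1..s}. Q j) (\<Sum>j\<in>{1..s}. u j) = 0"
        by (rule decomp_in) (use u in \<open>auto simp: W_eq\<close>)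
      then show "v \<in> alg_square scale m" using u sqk qq_def by simp
    qed
  qed
  have part3: "\<forall>u. (\<forall>j\<in>{1..s}. u j \<in> W j) \<and> (\<Sum>j=1..s. u j) = 0 \<longrightarrow> (\<forall>j\<in>{1..s}. u j = 0)"
  proof (intro allI impI ballI)
    fix u j assume h: "(\<forall>j\<in>{1..s}. u j \<in> W j) \<and> (\<Sum>j=1..s. u j) = 0" and j: "j \<in> {1..s}"
    show "u j = 0"
      by (rule decomp_unique[OF _ cop _ _ j]) (use h in \<open>auto simp: W_eq\<close>)
  qed
  have part4: "\<forall>j\<in>{1..s}. \<forall>i\<in>{1..N j}. (j, i) \<noteq> (1, N 1) \<longrightarrow> is_ideal scale m (U j i)"
  proof (intro ballI impI)
    fix j i assume j: "j \<in> {1..s}" and i: "i \<in> {1..N j}" and ji: "(j, i) \<noteq> (1, N 1)"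
    have U_eq: "U j i = {b. E (P j ^ i) b = 0}" by (simp add: U_def E_power)
    have "i \<le> e j" using i ji by (auto simp: e_def)
    then have "P j ^ i dvd Q j" unfolding Q_def by (rule le_imp_power_dvd)
    moreover have "Q j dvd qq" unfolding qq_def using j by (intro dvd_prodI) auto
    ultimately have dv: "P j ^ i dvd qq" by (rule dvd_trans)
    have inS: "u \<in> S" if "u \<in> U j i" for u
      using that S_ker E_dvd[OF dv] by (auto simp: U_eq)
    have right: "m u x \<in> U j i" if "u \<in> U j i" for u x
      using S_LA[OF inS[OF that]] by (simp add: U_eq)
    have left: "m x u \<in> U j i" if u: "u \<in> U j i" for u x
    proof -
      have "x \<in> {x. m x u \<in> U j i}"
      proof (rule span_all)
        show "subspace {x. m x u \<in> U j i}"
          by (rule pre_subspace) (simp_all add: ml_add ml_scale U_eq ker_subspace)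
      next
        fix k assume k: "k \<in> {1..n}"
        show "A k \<in> {x. m x u \<in> U j i}"
        proof (cases "k = 1")
          case True then show ?thesis using u A1 by (simp add: U_eq E_comm)
        next
          case False then show ?thesis using LA[of k u] k by (simp add: U_eq)
        qed
      qed
      then show ?thesis by simp
    qed
    show "is_ideal scale m (U j i)"
      unfolding is_ideal_def using left right by (simp add: U_eq ker_subspace)
  qed
  show ?thesis using part1 part2 part3 part4 by (intro conjI)
qed

end
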